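(* Let $\mathbf{f}$ be a simple problem and $\mathbf{g}\subsetneq\mathbf{f}$ a proper subproblem. Then $\partial X^*(\mathbf{f})\supseteq X^*(\mathbf{g})$.
   Context: A problem is a finite set $\mathbf{f}=\{f_1,\dots,f_m\}$ of functions $f_i:\mathbb{R}^n\to\mathbb{R}$ together with a feasible region $X\subseteq\mathbb{R}^n$, to be minimized simultaneously. A subproblem $\mathbf{g}\subseteq\mathbf{f}$ is a subset of these functions (including $\emptyset$ and $\mathbf{f}$), with the same $X$; its evaluation map is $x\mapsto(f_i(x))_{f_i\in\mathbf{g}}\in\mathbb{R}^{|\mathbf{g}|}$. The Pareto set $X^*(\mathbf{g})$ is the set of $x^*\in X$ for which there is no $x\in X$ with $f_i(x)\le f_i(x^* )$ for all $f_i\in\mathbf{g}$ and $f_j(x)<f_j(x^* )$ for some $f_j\in\mathbf{g}$; by convention $X^*(\emptyset)=\emptyset$. A problem $\mathbf{f}$ is simple if every subproblem $\mathbf{g}\subseteq\mathbf{f}$ with $k=|\mathbf{g}|$ objectives satisfies: (S1) $X^*(\mathbf{g})$ is homeomorphic to $\Delta^{k-1}=\{t\in[0,1]^k:\sum t_i=1\}$ (with $\Delta^{-1}=\emptyset$); (S2) the evaluation map of $\mathbf{g}$ restricted to $X^*(\mathbf{g})$ is a topological embedding into $\mathbb{R}^k$. For a simple problem, $X^*(\mathbf{f})$ is homeomorphic to a simplex, hence a topological manifold with boundary; $\partial$ denotes its manifold boundary (empty for a single point). All sets carry the subspace topology from Euclidean space. *)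

theory Defs
  imports "HOL-Analysis.Analysis"
begin

text \<open>Euclidean k-space, realised as the finitely supported sequences
  vanishing from index k on, with the (product = Euclidean) topology.\<close>
definition Rk :: "nat \<Rightarrow> (nat \<Rightarrow> real) set" where
  "Rk k = {v. \<forall>i\<ge>k. v i = 0}"

text \<open>Standard simplex Delta^(k-1) in R^k (empty for k = 0).\<close>
definition std_simplex :: "nat \<Rightarrow> (nat \<Rightarrow> real) set" where
  "std_simplex k = {t. (\<forall>i<k. 0 \<le> t i \<and> t i \<le> 1) \<and> (\<forall>i\<ge>k. t i = 0) \<and> (\<Sum>i<k. t i) = 1}"

definition pareto_set :: "'a set \<Rightarrow> ('a \<Rightarrow> real) set \<Rightarrow> 'a set" where
  "pareto_set X G = (if G = {} then {} else
     {xs \<in> X. \<not> (\<exists>x\<in>X. (\<forall>f\<in>G. f x \<le> f xs) \<and> (\<exists>f\<in>G. f x < f xs))})"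

text \<open>Evaluation map of G: x maps to (g x) for g in G (coordinates outside G are 0),
  valued in R^G with the product topology.\<close>
definition eval_map :: "('a \<Rightarrow> real) set \<Rightarrow> 'a \<Rightarrow> (('a \<Rightarrow> real) \<Rightarrow> real)" where
  "eval_map G x = (\<lambda>g. if g \<in> G then g x else 0)"

definition topological_embedding_on :: "'a::topological_space set \<Rightarrow> ('a \<Rightarrow> 'b::topological_space) \<Rightarrow> bool" where
  "topological_embedding_on S e \<longleftrightarrow> (\<exists>h. homeomorphism S (e ` S) e h)"

definition simple_problem :: "'a::euclidean_space set \<Rightarrow> ('a \<Rightarrow> real) set \<Rightarrow> bool" where
  "simple_problem X F \<longleftrightarrow> finite F \<and>
     (\<forall>G\<subseteq>F. pareto_set X G homeomorphic std_simplex (card G) \<and>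
              topological_embedding_on (pareto_set X G) (eval_map G))"

definition manifold_interior :: "'a::topological_space set \<Rightarrow> 'a set" where
  "manifold_interior S = {x \<in> S. \<exists>U. openin (top_of_set S) U \<and> x \<in> U \<and>
     (\<exists>k V. openin (top_of_set (Rk k)) V \<and> U homeomorphic V)}"

definition manifold_boundary :: "'a::topological_space set \<Rightarrow> 'a set" where
  "manifold_boundary S = S - manifold_interior S"

end

theory Submission
  imports Defs "HOL-Homology.Homology"
begin

lemma Eucl_Rk: "Euclidean_space k = top_of_set (Rk k)"
  by (simp add: Euclidean_space_def euclidean_product_topology Rk_def)

lemma small_curve:
  fixes \<gamma> :: "real \<Rightarrow> 'b::topological_space"
  assumes "continuous_on UNIV \<gamma>" "open Op" "\<gamma> 0 \<in> Op"
  obtains e where "e > 0" "\<And>t. \<bar>t\<bar> < e \<Longrightarrow> \<gamma> t \<in> Op"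
proof -
  have "open (\<gamma> -` Op)" using assms open_vimage by blast
  moreover have "0 \<in> \<gamma> -` Op" using assms by simp
  ultimately obtain e where "e > 0" "ball 0 e \<subseteq> \<gamma> -` Op"
    using open_contains_ball by blast
  then have "\<And>t. \<bar>t\<bar> < e \<Longrightarrow> \<gamma> t \<in> Op"
    by (auto simp: dist_real_def subset_iff)
  then show ?thesis using that \<open>e > 0\<close> by blast
qed

lemma pert:
  assumes "openin (top_of_set (Rk n)) S" "y \<in> S" "a < n"
  shows "\<exists>t<0. (\<lambda>i. y i + (if i = a then t else 0)) \<in> S"
proof -
  obtain Op where Op: "open Op" "S = Rk n \<inter> Op" using assms(1) openin_open by blast
  define \<gamma> where "\<gamma> = (\<lambda>t::real. (\<lambda>i. y i + t * (if i = a then 1 else 0)))"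
  have "continuous_on UNIV \<gamma>" unfolding \<gamma>_def
    by (intro continuous_on_coordinatewise_then_product continuous_intros)
  moreover have "\<gamma> 0 \<in> Op" using assms Op by (simp add: \<gamma>_def)
  ultimately obtain e where e: "e > 0" "\<And>t. \<bar>t\<bar> < e \<Longrightarrow> \<gamma> t \<in> Op"
    using small_curve Op(1) by blast
  define t0 where "t0 = -e/2"
  have "\<gamma> t0 \<in> Op" using e by (simp add: t0_def)
  moreover have "\<gamma> t0 \<in> Rk n" using assms Op by (auto simp: \<gamma>_def Rk_def)
  moreover have "\<gamma> t0 = (\<lambda>i. y i + (if i = a then t0 else 0))" by (auto simp: \<gamma>_def)
  moreover have "t0 < 0" using e by (simp add: t0_def)
  ultimately show ?thesis using Op by (intro exI[of _ t0]) auto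
qed

lemma dim_le:
  assumes W: "openin (top_of_set (Rk n)) W" "w \<in> W"
    and cont: "continuous_on W \<rho>" and inj: "inj_on \<rho> W" and im: "\<rho> ` W \<subseteq> Rk k"
  shows "n \<le> k"
proof (rule ccontr)
  assume "\<not> n \<le> k"
  hence kn: "k < n" by simp
  have WR: "W \<subseteq> Rk n" using W openin_imp_subset by blast
  have imn: "\<rho> ` W \<subseteq> Rk n" using im kn by (auto simp: Rk_def)
  have "openin (Euclidean_space n) (\<rho> ` W)"
  proof (rule invariance_of_domain_Euclidean_space)
    show "openin (Euclidean_space n) W" using W by (simp add: Eucl_Rk)
    show "continuous_map (subtopology (Euclidean_space n) W) (Euclidean_space n) \<rho>"
      unfolding Eucl_Rk using cont imn WR
      by (simp add: subtopology_subtopology Int_absorb1 continuous_map_in_subtopology image_subset_iff)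
    show "inj_on \<rho> W" by fact
  qed
  then obtain t where t: "t < 0" "(\<lambda>i. \<rho> w i + (if i = n - 1 then t else 0)) \<in> \<rho> ` W"
    using pert[of n "\<rho> ` W" "\<rho> w" "n - 1"] kn W by (auto simp: Eucl_Rk)
  have "\<rho> w \<in> Rk k" using im W by auto
  hence "\<rho> w (n - 1) = 0" using kn by (simp add: Rk_def)
  moreover have "(\<lambda>i. \<rho> w i + (if i = n - 1 then t else 0)) \<in> Rk k" using t im by auto
  ultimately show False using t kn by (auto simp: Rk_def dest!: spec[of _ "n - 1"])
qed

lemma pareto_iff:
  "G \<noteq> {} \<Longrightarrow> x \<in> pareto_set X G \<longleftrightarrow>
     x \<in> X \<and> \<not> (\<exists>y\<in>X. (\<forall>f\<in>G. f y \<le> f x) \<and> (\<exists>f\<in>G. f y < f x))"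
  by (simp add: pareto_set_def)

lemma simple_facts:
  assumes "simple_problem X F" "G \<subseteq> F"
  shows "continuous_on (pareto_set X G) (eval_map G)"
    "inj_on (eval_map G) (pareto_set X G)"
    "pareto_set X G homeomorphic std_simplex (card G)"
    "finite F"
proof -
  obtain h where h: "homeomorphism (pareto_set X G) (eval_map G ` pareto_set X G) (eval_map G) h"
    using assms unfolding simple_problem_def topological_embedding_on_def by blast
  then show "continuous_on (pareto_set X G) (eval_map G)" by (simp add: homeomorphism_def)
  show "inj_on (eval_map G) (pareto_set X G)" using h
    unfolding homeomorphism_def by (intro inj_on_inverseI[where g=h]) auto
  show "pareto_set X G homeomorphic std_simplex (card G)" "finite F"
    using assms unfolding simple_problem_def by auto
qed

lemma cont_F:
  assumes "simple_problem X F" "f \<in> F"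
  shows "continuous_on (pareto_set X F) f"
proof -
  have "continuous_on (pareto_set X F) (eval_map F)" using simple_facts(1)[OF assms(1)] by blast
  hence "continuous_on (pareto_set X F) (\<lambda>x. eval_map F x f)"
    by (rule continuous_on_product_then_coordinatewise)
  thus ?thesis using assms(2) by (simp add: eval_map_def)
qed

lemma pareto_mono:
  assumes "simple_problem X F" "G \<subseteq> F"
  shows "pareto_set X G \<subseteq> pareto_set X F"
proof
  fix x assume xG: "x \<in> pareto_set X G"
  then have Gne: "G \<noteq> {}" by (auto simp: pareto_set_def)
  hence Fne: "F \<noteq> {}" using assms by auto
  have xX: "x \<in> X" and nd: "\<not> (\<exists>y\<in>X. (\<forall>f\<in>G. f y \<le> f x) \<and> (\<exists>f\<in>G. f y < f x))"
    using xG pareto_iff[OF Gne, of x X] by auto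
  show "x \<in> pareto_set X F"
  proof (rule ccontr)
    assume "x \<notin> pareto_set X F"
    then obtain y where y: "y \<in> X" "\<forall>f\<in>F. f y \<le> f x" "\<exists>f\<in>F. f y < f x"
      using pareto_iff[OF Fne, of x X] xX by auto
    have nlt: "\<not> (\<exists>f\<in>G. f y < f x)"
    proof -
      have "\<forall>f\<in>G. f y \<le> f x" using y(2) assms(2) by blast
      thus ?thesis using nd y(1) by blast
    qed
    have eqG: "\<forall>f\<in>G. f y = f x"
    proof
      fix f assume f: "f \<in> G"
      hence "f y \<le> f x" using y(2) assms(2) by blast
      moreover have "\<not> f y < f x" using nlt f by blast
      ultimately show "f y = f x" by linarith
    qed
    have yG: "y \<in> pareto_set X G"
    proof -
      have "\<not> (\<exists>z\<in>X. (\<forall>f\<in>G. f z \<le> f y) \<and> (\<exists>f\<in>G. f z < f y))"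
      proof
        assume "\<exists>z\<in>X. (\<forall>f\<in>G. f z \<le> f y) \<and> (\<exists>f\<in>G. f z < f y)"
        then obtain z where z: "z \<in> X" "\<forall>f\<in>G. f z \<le> f y" "\<exists>f\<in>G. f z < f y" by blast
        have "\<forall>f\<in>G. f z \<le> f x"
        proof
          fix f assume "f \<in> G"
          then have "f z \<le> f y" "f y = f x" using z(2) eqG by blast+
          then show "f z \<le> f x" by linarith
        qed
        moreover have "\<exists>f\<in>G. f z < f x"
        proof -
          obtain f where "f \<in> G" "f z < f y" using z(3) by blast
          moreover have "f y = f x" using eqG \<open>f \<in> G\<close> by blast
          ultimately show ?thesis by (intro bexI[of _ f]) auto
        qed
        ultimately show False using nd z(1) by blast
      qed
      thus ?thesis using pareto_iff[OF Gne, of y X] y(1) by auto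
    qed
    have "eval_map G y = eval_map G x" using eqG by (auto simp: eval_map_def)
    hence "y = x" using simple_facts(2)[OF assms] yG xG by (auto dest: inj_onD)
    thus False using y(3) by auto
  qed
qed

theorem corollary3:
  fixes X :: "'a::euclidean_space set" and F G :: "('a \<Rightarrow> real) set"
  assumes "simple_problem X F"
    and "G \<subset> F"
  shows "pareto_set X G \<subseteq> manifold_boundary (pareto_set X F)"
proof
  fix x assume xG: "x \<in> pareto_set X G"
  define P where "P = pareto_set X F"
  have fin: "finite F" using simple_facts(4)[OF assms(1)] by blast
  have GF: "G \<subseteq> F" using assms(2) by auto
  have Gne: "G \<noteq> {}" using xG by (auto simp: pareto_set_def)
  have Fne: "F \<noteq> {}" using Gne GF by auto
  have ndx: "\<not> (\<exists>y\<in>X. (\<forall>f\<in>G. f y \<le> f x) \<and> (\<exists>f\<in>G. f y < f x))"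
    using xG pareto_iff[OF Gne, of x X] by auto
  have xP: "x \<in> P" using pareto_mono[OF assms(1) GF] xG P_def by auto
  have PX: "P \<subseteq> X" unfolding P_def pareto_set_def by auto
  show "x \<in> manifold_boundary P"
  proof (rule ccontr)
    assume "x \<notin> manifold_boundary P"
    then have "x \<in> manifold_interior P" using xP by (simp add: manifold_boundary_def)
    then obtain U k V where U: "openin (top_of_set P) U" "x \<in> U"
      and V: "openin (top_of_set (Rk k)) V" and UV: "U homeomorphic V"
      unfolding manifold_interior_def by blast
    obtain a b where ab: "homeomorphism U V a b" using UV homeomorphic_def by blast
    obtain j where j: "j \<in> F" "j \<notin> G" using assms(2) by blast
    define m where "m = card F"
    define n where "n = m - 1"
    have "card F > 0" using fin Fne by (simp add: card_gt_0_iff)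
    hence mn: "m = Suc n" by (simp add: m_def n_def)
    have cardF': "card (F - {j}) = n" using fin j by (simp add: m_def n_def)
    obtain c where c: "bij_betw c {0..<n} (F - {j})"
      using ex_bij_betw_nat_finite[of "F - {j}"] fin cardF' by auto
    have cF: "\<And>i. i < n \<Longrightarrow> c i \<in> F" using c by (auto simp: bij_betw_def)
    have cex: "\<exists>i<n. f = c i" if "f \<in> F - {j}" for f
    proof -
      have "f \<in> c ` {0..<n}" using c that by (simp add: bij_betw_def)
      then show ?thesis by auto
    qed
    define h where "h = (\<lambda>y. \<lambda>i. if i < n then c i y else (0::real))"
    have UP: "U \<subseteq> P" using U openin_imp_subset by auto
    have VR: "V \<subseteq> Rk k" using V openin_imp_subset by auto
    have contF: "\<And>f. f \<in> F \<Longrightarrow> continuous_on P f" using cont_F assms(1) P_def by blast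
    have hcont: "continuous_on P h"
      unfolding h_def
    proof (intro continuous_on_coordinatewise_then_product)
      fix i show "continuous_on P (\<lambda>y. if i < n then c i y else 0)"
        by (cases "i < n") (simp_all add: contF cF)
    qed
    have hRk: "\<And>y. h y \<in> Rk n" by (simp add: h_def Rk_def)
    have hinj: "inj_on h P"
    proof (rule inj_onI)
      fix y1 y2 assume y1: "y1 \<in> P" and y2: "y2 \<in> P" and e: "h y1 = h y2"
      have eqF': "f y1 = f y2" if fF: "f \<in> F - {j}" for f
      proof -
        obtain i where "i < n" "f = c i" using cex[OF fF] by blast
        then show ?thesis using fun_cong[OF e, of i] by (simp add: h_def)
      qed
      have nd: "\<not> (\<exists>z\<in>X. (\<forall>f\<in>F. f z \<le> f w) \<and> (\<exists>f\<in>F. f z < f w))" if "w \<in> P" for w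
        using that pareto_iff[OF Fne, of w X] P_def by auto
      have jeq: "j y1 = j y2"
      proof (rule ccontr)
        assume "j y1 \<noteq> j y2"
        then consider "j y1 < j y2" | "j y2 < j y1" by linarith
        then show False
        proof cases
          case 1
          have "\<forall>f\<in>F. f y1 \<le> f y2"
          proof
            fix f assume "f \<in> F"
            then show "f y1 \<le> f y2" using eqF'[of f] 1 by (cases "f = j") auto
          qed
          then show False using nd[OF y2] 1 j(1) y1 PX by blast
        next
          case 2
          have "\<forall>f\<in>F. f y2 \<le> f y1"
          proof
            fix f assume "f \<in> F"
            then show "f y2 \<le> f y1" using eqF'[of f] 2 by (cases "f = j") auto
          qed
          then show False using nd[OF y1] 2 j(1) y2 PX by blast
        qed
      qed
      have "eval_map F y1 = eval_map F y2"
      proof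
        fix f show "eval_map F y1 f = eval_map F y2 f"
          using eqF'[of f] jeq by (cases "f = j") (auto simp: eval_map_def)
      qed
      then show "y1 = y2" using simple_facts(2)[OF assms(1) order_refl] y1 y2 P_def
        by (auto dest: inj_onD)
    qed
    have bV: "b ` V = U" and aU: "a ` U = V" and ba: "\<And>u. u \<in> U \<Longrightarrow> b (a u) = u"
      and abv: "\<And>v. v \<in> V \<Longrightarrow> a (b v) = v"
      and acont: "continuous_on U a" and bcont: "continuous_on V b"
      using ab unfolding homeomorphism_def by auto
    have "n \<le> k"
    proof -
      have "P homeomorphic std_simplex m"
        using simple_facts(3)[OF assms(1) order_refl] by (simp add: P_def m_def)
      then obtain \<phi> \<phi>' where ph: "homeomorphism P (std_simplex m) \<phi> \<phi>'"
        using homeomorphic_def by blast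
      have phP: "\<phi> ` P = std_simplex m" and php: "\<And>u. u \<in> P \<Longrightarrow> \<phi>' (\<phi> u) = u"
        and pph: "\<And>v. v \<in> std_simplex m \<Longrightarrow> \<phi> (\<phi>' v) = v"
        and ph'cont: "continuous_on (std_simplex m) \<phi>'"
        using ph unfolding homeomorphism_def by auto
      have "openin (top_of_set (std_simplex m)) (\<phi> ` U)"
        using homeomorphism_imp_open_map[OF ph U(1)] .
      then obtain Op where Op: "open Op" "\<phi> ` U = std_simplex m \<inter> Op"
        using openin_open by blast
      define p where "p = \<phi> x"
      have "p \<in> \<phi> ` U" using U(2) by (simp add: p_def)
      hence pD: "p \<in> std_simplex m" and pO: "p \<in> Op" using Op(2) by auto
      define c0 where "c0 = (\<lambda>i. if i < m then 1 / real m else 0::real)"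
      define \<gamma> where "\<gamma> = (\<lambda>s::real. \<lambda>i. (1 - s) * p i + s * c0 i)"
      have "continuous_on UNIV \<gamma>" unfolding \<gamma>_def
        by (intro continuous_on_coordinatewise_then_product continuous_intros)
      moreover have "\<gamma> 0 \<in> Op" using pO by (simp add: \<gamma>_def)
      ultimately obtain e where e: "e > 0" "\<And>s. \<bar>s\<bar> < e \<Longrightarrow> \<gamma> s \<in> Op"
        using small_curve Op(1) by blast
      define s0 where "s0 = min (e/2) (1/2)"
      have s0: "0 < s0" "s0 < 1" "\<bar>s0\<bar> < e" using e by (auto simp: s0_def)
      define q where "q = \<gamma> s0"
      have qO: "q \<in> Op" using e s0 by (simp add: q_def)
      have m0: "real m > 0" using mn by simp
      have pr1: "\<And>i. i < m \<Longrightarrow> 0 \<le> p i \<and> p i \<le> 1" and pr2: "\<And>i. i \<ge> m \<Longrightarrow> p i = 0"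
        and pr3: "(\<Sum>i<m. p i) = 1"
        using pD by (auto simp: std_simplex_def)
      have qpos: "0 < q i" if "i < m" for i
      proof -
        have "0 \<le> (1 - s0) * p i" using pr1[OF that] s0 by simp
        moreover have "0 < s0 * c0 i" using s0 m0 that by (simp add: c0_def)
        ultimately show "0 < q i" by (simp add: q_def \<gamma>_def)
      qed
      have qle: "q i \<le> 1" if "i < m" for i
      proof -
        have "(1 - s0) * p i \<le> (1 - s0) * 1" using pr1[OF that] s0
          by (intro mult_left_mono) auto
        moreover have "c0 i \<le> 1" using that mn by (simp add: c0_def)
        hence "s0 * c0 i \<le> s0 * 1" using s0 by (intro mult_left_mono) auto
        ultimately show "q i \<le> 1" by (simp add: q_def \<gamma>_def)
      qed
      have qz: "q i = 0" if "i \<ge> m" for i using pr2[OF that] that by (simp add: q_def \<gamma>_def c0_def)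
      have c0sum: "(\<Sum>i<m. c0 i) = 1"
      proof -
        have "(\<Sum>i<m. c0 i) = (\<Sum>i<m. 1 / real m)" by (rule sum.cong) (auto simp: c0_def)
        also have "\<dots> = 1" using m0 by simp
        finally show ?thesis .
      qed
      have qsum: "(\<Sum>i<m. q i) = 1"
      proof -
        have "(\<Sum>i<m. q i) = (1 - s0) * (\<Sum>i<m. p i) + s0 * (\<Sum>i<m. c0 i)"
          by (simp add: q_def \<gamma>_def sum.distrib sum_distrib_left)
        thus ?thesis using pr3 c0sum by simp
      qed
      define \<sigma> where "\<sigma> = (\<lambda>s::nat\<Rightarrow>real. \<lambda>i. if i < n then s i else if i = n then 1 - (\<Sum>l<n. s l) else 0)"
      define W where "W = {s \<in> Rk n. (\<forall>i<n. 0 < s i) \<and> (\<Sum>l<n. s l) < 1 \<and> \<sigma> s \<in> Op}"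
      have scont: "continuous_on UNIV \<sigma>"
        unfolding \<sigma>_def
      proof (intro continuous_on_coordinatewise_then_product)
        fix i show "continuous_on UNIV (\<lambda>s::nat\<Rightarrow>real. if i < n then s i else if i = n then 1 - (\<Sum>l<n. s l) else 0)"
          by (cases "i < n"; cases "i = n") (auto intro!: continuous_intros)
      qed
      have Wopen: "openin (top_of_set (Rk n)) W"
      proof -
        have "W = Rk n \<inter> ((\<Inter>i\<in>{..<n}. {s. 0 < s i}) \<inter> {s. (\<Sum>l<n. s l) < 1} \<inter> \<sigma> -` Op)"
          by (auto simp: W_def)
        moreover have "open ((\<Inter>i\<in>{..<n}. {s::nat\<Rightarrow>real. 0 < s i}) \<inter> {s. (\<Sum>l<n. s l) < 1} \<inter> \<sigma> -` Op)"
          by (intro open_Int open_INT open_vimage scont Op(1) ballI finite_lessThan open_Collect_less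
              continuous_intros continuous_on_product_coordinates)
        ultimately show ?thesis using openin_open_Int by metis
      qed
      define w0 where "w0 = (\<lambda>i. if i < n then q i else 0)"
      have w0sum: "(\<Sum>l<n. w0 l) = (\<Sum>l<n. q l)" by (rule sum.cong) (auto simp: w0_def)
      have qsum': "(\<Sum>l<n. q l) + q n = 1" using qsum mn by simp
      have sw0: "\<sigma> w0 = q"
      proof
        fix i show "\<sigma> w0 i = q i"
          using w0sum qsum' qz[of i] mn by (auto simp: \<sigma>_def w0_def)
      qed
      have qn: "0 < q n" using qpos mn by simp
      have qlt: "(\<Sum>l<n. q l) < 1" using qn qsum' by linarith
      have w0W: "w0 \<in> W"
        using qlt qpos mn w0sum qsum' sw0 qO by (auto simp: W_def Rk_def w0_def)
      have sD: "\<sigma> s \<in> std_simplex m" if sW: "s \<in> W" for s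
      proof -
        have pos: "\<And>i. i < n \<Longrightarrow> 0 < s i" and sl: "(\<Sum>l<n. s l) < 1" and sR: "s \<in> Rk n"
          using sW by (auto simp: W_def)
        have le: "s i \<le> (\<Sum>l<n. s l)" if "i < n" for i
          using that pos by (intro member_le_sum) (auto intro: less_imp_le)
        have nn: "0 \<le> (\<Sum>l<n. s l)" using pos by (intro sum_nonneg) (auto intro: less_imp_le)
        have sum1: "(\<Sum>l<n. \<sigma> s l) = (\<Sum>l<n. s l)" by (rule sum.cong) (auto simp: \<sigma>_def)
        have "(\<Sum>i<m. \<sigma> s i) = 1" using mn sum1 by (simp add: \<sigma>_def)
        moreover have "\<forall>i<m. 0 \<le> \<sigma> s i \<and> \<sigma> s i \<le> 1"
        proof (intro allI impI)
          fix i assume "i < m"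
          then consider "i < n" | "i = n" using mn by linarith
          then show "0 \<le> \<sigma> s i \<and> \<sigma> s i \<le> 1"
            by cases (use pos le sl nn in \<open>fastforce simp: \<sigma>_def\<close>)+
        qed
        moreover have "\<forall>i\<ge>m. \<sigma> s i = 0" using mn by (simp add: \<sigma>_def)
        ultimately show ?thesis by (simp add: std_simplex_def)
      qed
      have sU: "\<sigma> s \<in> \<phi> ` U" if "s \<in> W" for s using sD[OF that] that Op(2) by (auto simp: W_def)
      have ph'U: "\<phi>' v \<in> U" if "v \<in> \<phi> ` U" for v using that php UP by auto
      define \<rho> where "\<rho> = (\<lambda>s. a (\<phi>' (\<sigma> s)))"
      have rcont: "continuous_on W \<rho>"
      proof -
        have c1: "continuous_on W \<sigma>" using scont continuous_on_subset by blast
        have c2: "continuous_on (\<sigma> ` W) \<phi>'"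
          using continuous_on_subset[OF ph'cont] sD by blast
        have c3: "continuous_on ((\<phi>' \<circ> \<sigma>) ` W) a"
        proof (rule continuous_on_subset[OF acont])
          show "(\<phi>' \<circ> \<sigma>) ` W \<subseteq> U"
          proof (rule image_subsetI)
            fix s assume "s \<in> W"
            then show "(\<phi>' \<circ> \<sigma>) s \<in> U" using ph'U[OF sU] by simp
          qed
        qed
        show ?thesis using continuous_on_compose[OF continuous_on_compose[OF c1 c2] c3]
          by (simp add: comp_def \<rho>_def)
      qed
      have rinj: "inj_on \<rho> W"
      proof (rule inj_onI)
        fix s1 s2 assume s1: "s1 \<in> W" and s2: "s2 \<in> W" and e: "\<rho> s1 = \<rho> s2"
        have u1: "\<phi>' (\<sigma> s1) \<in> U" using ph'U[OF sU[OF s1]] .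
        have u2: "\<phi>' (\<sigma> s2) \<in> U" using ph'U[OF sU[OF s2]] .
        have "a (\<phi>' (\<sigma> s1)) = a (\<phi>' (\<sigma> s2))" using e unfolding \<rho>_def .
        hence "b (a (\<phi>' (\<sigma> s1))) = b (a (\<phi>' (\<sigma> s2)))" by (rule arg_cong)
        hence "\<phi>' (\<sigma> s1) = \<phi>' (\<sigma> s2)" unfolding ba[OF u1] ba[OF u2] .
        hence "\<phi> (\<phi>' (\<sigma> s1)) = \<phi> (\<phi>' (\<sigma> s2))" by (rule arg_cong)
        hence e1: "\<sigma> s1 = \<sigma> s2" unfolding pph[OF sD[OF s1]] pph[OF sD[OF s2]] .
        have r1: "s1 \<in> Rk n" and r2: "s2 \<in> Rk n" using s1 s2 unfolding W_def by blast+
        show "s1 = s2"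
        proof
          fix i show "s1 i = s2 i"
          proof (cases "i < n")
            case True then show ?thesis using fun_cong[OF e1, of i] by (simp add: \<sigma>_def)
          next
            case False then show ?thesis using r1 r2 by (simp add: Rk_def)
          qed
        qed
      qed
      have rim: "\<rho> ` W \<subseteq> Rk k"
      proof (rule image_subsetI)
        fix s assume "s \<in> W"
        then have "\<phi>' (\<sigma> s) \<in> U" using ph'U[OF sU] by simp
        then have "\<rho> s \<in> V" using aU by (auto simp: \<rho>_def)
        then show "\<rho> s \<in> Rk k" using VR by auto
      qed
      show "n \<le> k" by (rule dim_le[OF Wopen w0W rcont rinj rim])
    qed
    have hUopen: "openin (top_of_set (Rk n)) (h ` U)"
    proof -
      have "openin (Euclidean_space n) ((h \<circ> b) ` V)"
      proof (rule invariance_of_domain_Euclidean_space_gen[OF \<open>n \<le> k\<close>])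
        show "openin (Euclidean_space k) V" using V by (simp add: Eucl_Rk)
        have "continuous_on V (h \<circ> b)"
          using continuous_on_compose[OF bcont, of h] continuous_on_subset[OF hcont UP] bV by simp
        then show "continuous_map (subtopology (Euclidean_space k) V) (Euclidean_space n) (h \<circ> b)"
          unfolding Eucl_Rk using VR hRk
          by (simp add: subtopology_subtopology Int_absorb1 continuous_map_in_subtopology image_subset_iff)
        show "inj_on (h \<circ> b) V"
        proof (rule comp_inj_on)
          show "inj_on b V" using abv by (rule inj_on_inverseI)
          show "inj_on h (b ` V)" using bV UP inj_on_subset[OF hinj] by simp
        qed
      qed
      moreover have "(h \<circ> b) ` V = h ` U" by (metis bV image_comp)
      ultimately show ?thesis by (simp add: Eucl_Rk)
    qed
    obtain g0 where g0: "g0 \<in> G" using Gne by blast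
    obtain a0 where a0: "a0 < n" "g0 = c a0" using cex[of g0] g0 GF j by auto
    obtain t where t: "t < 0" "(\<lambda>i. h x i + (if i = a0 then t else 0)) \<in> h ` U"
      using pert[OF hUopen _ a0(1), of "h x"] U(2) by blast
    then obtain y where y: "y \<in> U" "h y = (\<lambda>i. h x i + (if i = a0 then t else 0))" by auto
    have hy: "c i y = c i x + (if i = a0 then t else 0)" if "i < n" for i
      using fun_cong[OF y(2), of i] that by (simp add: h_def)
    have "\<forall>f\<in>G. f y \<le> f x"
    proof
      fix f assume "f \<in> G"
      then obtain i where "i < n" "f = c i" using cex[of f] GF j by auto
      then show "f y \<le> f x" using hy[of i] t(1) by auto
    qed
    moreover have "g0 y < g0 x" using hy[OF a0(1)] a0 t(1) by simp
    moreover have "y \<in> X" using y(1) UP PX by auto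
    ultimately show False using ndx g0 by blast
  qed
qed

end
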